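(* In the setting described in the context, assume that $q=p^h$ is a square, that $t$ is a prime divisor of $q^2+q+1$, and that $p \bmod t$ is a generator of the multiplicative group of $\mathbb{Z}_t$. Then $t$ divides either $q+\sqrt q+1$ or $q-\sqrt q+1$, and there is $\varepsilon\in\{1,-1\}$ such that $$w_1=w_2=\dots=w_{t-1}=\frac{q+1+\varepsilon\sqrt q}{t},\qquad w_0=\frac{q+1+\varepsilon(1-t)\sqrt q}{t}.$$
   Context: Let $q=p^h$ with $p$ prime, $h\ge1$. Let $\alpha$ be a primitive element of $\mathbb{F}_{q^3}$; the points of $PG(2,q)$ are the 1-dimensional $\mathbb{F}_q$-subspaces of $\mathbb{F}_{q^3}$, and $P_i$ denotes the point represented by $\alpha^i$, so $PG(2,q)=\{P_0,\dots,P_{q^2+q}\}$. Let $\tau:P_i\mapsto P_{ip\bmod(q^2+q+1)}$ (a collineation) and let $\ell_0$ be a line of $PG(2,q)$ fixed by $\tau$. Let $t$ be a positive divisor of $q^2+q+1$ and for $i=0,\dots,t-1$ let $O_i=\{P_u:u\equiv i\pmod t\}$. For $u=0,\dots,t-1$ let $w_u=|\ell_0\cap O_u|$. *)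

theory Defs
  imports Complex_Main "HOL-Number_Theory.Residue_Primitive_Roots"
begin

text \<open>The ambient field F_{q^3} is a finite field type 'a with CARD('a) = q^3.
  The subfield F_q is the set of fixed points of x |-> x^q.\<close>

definition Fq :: "nat \<Rightarrow> 'a::field set" where
  "Fq q = {x. x ^ q = x}"

definition Fq_subspace :: "nat \<Rightarrow> 'a::field set \<Rightarrow> bool" where
  "Fq_subspace q W \<longleftrightarrow> 0 \<in> W \<and> (\<forall>x\<in>W. \<forall>y\<in>W. x + y \<in> W)
     \<and> (\<forall>c\<in>Fq q. \<forall>x\<in>W. c * x \<in> W)"

text \<open>A line of PG(2,q) is a 2-dimensional F_q-subspace of F_{q^3}, i.e. an
  F_q-subspace with q^2 elements.\<close>
definition is_line :: "nat \<Rightarrow> 'a::field set \<Rightarrow> bool" where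
  "is_line q W \<longleftrightarrow> Fq_subspace q W \<and> card W = q ^ 2"

definition primitive_element :: "'a::field \<Rightarrow> bool" where
  "primitive_element \<alpha> \<longleftrightarrow> \<alpha> \<noteq> 0 \<and> (\<forall>x. x \<noteq> 0 \<longrightarrow> (\<exists>k::nat. x = \<alpha> ^ k))"

definition pts_on :: "'a::field \<Rightarrow> nat \<Rightarrow> 'a set \<Rightarrow> nat set" where
  "pts_on \<alpha> q W = {i. i < q^2 + q + 1 \<and> \<alpha> ^ i \<in> W}"

definition tau :: "nat \<Rightarrow> nat \<Rightarrow> nat \<Rightarrow> nat" where
  "tau p q i = (i * p) mod (q^2 + q + 1)"

definition wcount :: "'a::field \<Rightarrow> nat \<Rightarrow> nat \<Rightarrow> 'a set \<Rightarrow> nat \<Rightarrow> nat" where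
  "wcount \<alpha> q t W u = card {i \<in> pts_on \<alpha> q W. i mod t = u}"

end

theory Submission
  imports Defs
begin

lemma ff_fermat:
  fixes x :: "'a::{field,finite}"
  assumes "x \<noteq> 0" shows "x ^ (card (UNIV::'a set) - 1) = 1"
proof -
  define G where "G = (UNIV :: 'a set) - {0}"
  have fin: "finite G" by (simp add: G_def)
  have bij: "bij_betw (\<lambda>y. x * y) G G"
    unfolding bij_betw_def G_def
  proof
    show "inj_on ((*) x) (UNIV - {0})" using assms by (auto simp: inj_on_def)
    show "(*) x ` (UNIV - {0}) = UNIV - {0}"
    proof
      show "(*) x ` (UNIV - {0}) \<subseteq> UNIV - {0}" using assms by auto
      show "UNIV - {0} \<subseteq> (*) x ` (UNIV - {0})"
      proof
        fix y :: 'a assume "y \<in> UNIV - {0}"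
        then have "y = x * (y / x)" "y / x \<in> UNIV - {0}" using assms by auto
        then show "y \<in> (*) x ` (UNIV - {0})" by blast
      qed
    qed
  qed
  have "prod (\<lambda>y. x * y) G = prod id G"
    using prod.reindex_bij_betw[OF bij, of id] by simp
  moreover have "prod (\<lambda>y. x * y) G = x ^ card G * prod id G"
    by (simp add: prod.distrib)
  moreover have "prod id G \<noteq> 0" using fin by (simp add: G_def)
  moreover have "card G = card (UNIV::'a set) - 1"
    unfolding G_def by (simp add: card_Diff_subset)
  ultimately show ?thesis by simp
qed

lemma prim_inj:
  fixes \<alpha> :: "'a::{field,finite}"
  assumes "primitive_element \<alpha>"
  shows "inj_on (\<lambda>k. \<alpha> ^ k) {..<card (UNIV::'a set) - 1}"
proof (rule ccontr)
  assume "\<not> ?thesis"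
  then obtain a b where ab: "a < b" "b < card (UNIV::'a set) - 1" "\<alpha>^a = \<alpha>^b"
    unfolding inj_on_def by (metis lessThan_iff linorder_neqE_nat)
  have a0: "\<alpha> \<noteq> 0" using assms by (simp add: primitive_element_def)
  define r where "r = b - a"
  have "\<alpha>^a * \<alpha>^r = \<alpha>^a * 1"
    using ab by (metis le_add_diff_inverse less_imp_le mult_1_right power_add r_def)
  then have r1: "\<alpha>^r = 1" using a0 by simp
  have r0: "0 < r" "r < card (UNIV::'a set) - 1" using ab by (auto simp: r_def)
  have "UNIV - {0} \<subseteq> (\<lambda>k. \<alpha>^k) ` {..<r}"
  proof
    fix x :: 'a assume "x \<in> UNIV - {0}"
    then obtain k where k: "x = \<alpha>^k" using assms by (auto simp: primitive_element_def)
    have "\<alpha>^(r * (k div r) + k mod r) = \<alpha>^(k mod r)"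
      using r1 by (simp only: power_add power_mult) simp
    then have "\<alpha>^k = \<alpha>^(k mod r)" by simp
    then show "x \<in> (\<lambda>k. \<alpha>^k) ` {..<r}" using k r0 by auto
  qed
  then have "card (UNIV - {0::'a}) \<le> card ((\<lambda>k. \<alpha>^k) ` {..<r})" by (intro card_mono) auto
  also have "\<dots> \<le> r" using card_image_le[of "{..<r}"] by simp
  finally show False using r0 by (simp add: card_Diff_subset)
qed

locale pg =
  fixes \<alpha> :: "'a::{field,finite}" and q :: nat and W :: "'a set"
  assumes card: "card (UNIV::'a set) = q^3" and q2: "q \<ge> 2"
    and prim: "primitive_element \<alpha>" and line: "is_line q W"
begin

definition N where "N = q^2 + q + 1"

lemma a0: "\<alpha> \<noteq> 0" using prim by (simp add: primitive_element_def)

lemma nq: "q^3 - 1 = (q - 1) * N"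
proof -
  obtain r where r: "q = Suc r" using q2 by (cases q) auto
  show ?thesis unfolding N_def by (simp add: r algebra_simps power3_eq_cube power2_eq_square)
qed

lemma an: "\<alpha>^(q^3-1) = 1" using ff_fermat[OF a0] card by simp

lemma aN1: "(\<alpha>^N)^(q-1) = 1" using an nq by (simp add: mult.commute power_mult)

lemma aN_Fq: "\<alpha>^N \<in> Fq q"
proof -
  have "q = 1 + (q - 1)" using q2 by simp
  then have "(\<alpha>^N)^q = (\<alpha>^N)^1 * (\<alpha>^N)^(q-1)"
    by (metis power_add)
  then show ?thesis using aN1 by (simp add: Fq_def)
qed

lemma Fq_pow: "c \<in> Fq q \<Longrightarrow> c^m \<in> Fq q"
proof -
  assume "c \<in> Fq q"
  then have "c^q = c" by (simp add: Fq_def)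
  have "(c^m)^q = (c^q)^m" by (simp only: power_mult[symmetric] mult.commute)
  then show ?thesis using \<open>c^q = c\<close> by (simp add: Fq_def)
qed

lemma sub: "Fq_subspace q W" using line by (simp add: is_line_def)
lemma cardW: "card W = q^2" using line by (simp add: is_line_def)

lemma W_scale: "x \<in> W \<Longrightarrow> c \<in> Fq q \<Longrightarrow> c * x \<in> W"
  using sub by (simp add: Fq_subspace_def)

lemma W_add: "x \<in> W \<Longrightarrow> y \<in> W \<Longrightarrow> x + y \<in> W"
  using sub by (simp add: Fq_subspace_def)

lemma W0: "0 \<in> W"
  using sub by (simp add: Fq_subspace_def)

lemma aN_pow_W: "x \<in> W \<Longrightarrow> (\<alpha>^N)^m * x \<in> W"
  using W_scale Fq_pow aN_Fq by blast

lemma a_split: "\<alpha>^k = (\<alpha>^N)^(k div N) * \<alpha>^(k mod N)"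
proof -
  have "\<alpha>^k = \<alpha>^(N * (k div N) + k mod N)" by simp
  also have "\<dots> = (\<alpha>^N)^(k div N) * \<alpha>^(k mod N)" by (simp only: power_add power_mult)
  finally show ?thesis .
qed

lemma W_mod: "\<alpha>^k \<in> W \<longleftrightarrow> \<alpha>^(k mod N) \<in> W"
proof
  assume "\<alpha>^k \<in> W"
  then have "(\<alpha>^N)^((k div N)*(q-2)) * \<alpha>^k \<in> W" by (rule aN_pow_W)
  moreover have "(\<alpha>^N)^((k div N)*(q-2)) * \<alpha>^k = \<alpha>^(k mod N)"
  proof -
    have "(\<alpha>^N)^((k div N)*(q-2)) * \<alpha>^k = (\<alpha>^N)^((k div N)*(q-2)) * (\<alpha>^N)^(k div N) * \<alpha>^(k mod N)"
      by (subst a_split) (simp add: mult.assoc)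
    also have "\<dots> = (\<alpha>^N)^((k div N)*(q-2) + k div N) * \<alpha>^(k mod N)"
      by (simp only: power_add)
    also have "(k div N)*(q-2) + k div N = (q-1) * (k div N)"
    proof -
      have "q - 1 = Suc (q-2)" using q2 by simp
      then show ?thesis by simp
    qed
    also have "(\<alpha>^N)^((q-1) * (k div N)) = 1" using aN1 by (simp add: power_mult)
    finally show ?thesis by simp
  qed
  ultimately show "\<alpha>^(k mod N) \<in> W" by simp
next
  assume "\<alpha>^(k mod N) \<in> W"
  then have "(\<alpha>^N)^(k div N) * \<alpha>^(k mod N) \<in> W" by (rule aN_pow_W)
  then show "\<alpha>^k \<in> W" by (simp flip: a_split)
qed

definition D where "D = {i. i < N \<and> \<alpha>^i \<in> W}"

lemma D_eq: "pts_on \<alpha> q W = D" by (simp add: pts_on_def D_def N_def)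

lemma finD: "finite D" by (simp add: D_def)

lemma a_mod_n: "\<alpha>^k = \<alpha>^(k mod (q^3-1))"
proof -
  have "\<alpha>^k = \<alpha>^((q^3-1) * (k div (q^3-1)) + k mod (q^3-1))" by simp
  also have "\<dots> = (\<alpha>^(q^3-1))^(k div (q^3-1)) * \<alpha>^(k mod (q^3-1))" by (simp only: power_add power_mult)
  finally show ?thesis using an by simp
qed

lemma Npos: "N > 0" by (simp add: N_def)

lemma cardD: "card D = q + 1"
proof -
  define f where "f = (\<lambda>(j,m). \<alpha>^(j + N*m))"
  have inj0: "inj_on (\<lambda>k. \<alpha>^k) {..<q^3-1}" using prim_inj[OF prim] card by simp
  have bij: "bij_betw f (D \<times> {..<q-1}) (W - {0})"
    unfolding bij_betw_def
  proof (intro conjI)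
    show "inj_on f (D \<times> {..<q-1})"
    proof (rule inj_onI)
      fix a b assume ha: "a \<in> D \<times> {..<q-1}" "b \<in> D \<times> {..<q-1}" "f a = f b"
      obtain j m where a: "a = (j,m)" by force
      obtain j' m' where b: "b = (j',m')" by force
      have h: "(j,m) \<in> D \<times> {..<q-1}" "(j',m') \<in> D \<times> {..<q-1}" "f (j,m) = f (j',m')"
        using ha a b by auto
      have lt: "j + N*m < q^3-1" if "j < N" "m < q-1" for j m
      proof -
        have "j + N*m < N + N*m" using that by simp
        also have "\<dots> = N * (m+1)" by (simp add: algebra_simps)
        also have "\<dots> \<le> N * (q-1)" using that by (intro mult_le_mono2) simp
        finally show ?thesis using nq by (simp add: mult.commute)
      qed
      have "j + N*m = j' + N*m'"
        using inj0 h lt unfolding f_def D_def inj_on_def by auto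
      then have "(j + N*m) mod N = (j' + N*m') mod N" "(j + N*m) div N = (j' + N*m') div N" by simp_all
      then show "a = b" using h Npos a b by (auto simp: D_def)
    qed
    show "f ` (D \<times> {..<q-1}) = W - {0}"
    proof
      show "f ` (D \<times> {..<q-1}) \<subseteq> W - {0}"
      proof clarify
        fix j m assume "j \<in> D" "m < q - 1"
        then have "\<alpha>^j \<in> W" by (simp add: D_def)
        then have "(\<alpha>^N)^m * \<alpha>^j \<in> W" by (rule aN_pow_W)
        moreover have "(\<alpha>^N)^m * \<alpha>^j = f (j,m)" unfolding f_def
          by (simp only: prod.case power_add power_mult[symmetric] mult.commute)
        ultimately show "f (j,m) \<in> W - {0}" using a0 by (simp add: f_def)
      qed
      show "W - {0} \<subseteq> f ` (D \<times> {..<q-1})"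
      proof
        fix x assume x: "x \<in> W - {0}"
        then obtain k where k: "x = \<alpha>^k" using prim by (auto simp: primitive_element_def)
        define k' where "k' = k mod (q^3-1)"
        have xk: "x = \<alpha>^k'" using k a_mod_n k'_def by simp
        have n0: "q^3 - 1 > 0" using q2 nq by (simp add: N_def)
        have "k' < q^3-1" using n0 by (simp add: k'_def)
        then have "k' < (q-1)*N" using nq by simp
        then have m: "k' div N < q - 1" by (simp add: div_less_iff_less_mult Npos mult.commute)
        have "\<alpha>^(k' mod N) \<in> W" using x xk W_mod by simp
        then have "k' mod N \<in> D" using Npos by (simp add: D_def)
        moreover have "f (k' mod N, k' div N) = x" by (simp add: f_def xk)
        ultimately show "x \<in> f ` (D \<times> {..<q-1})" using m by force
      qed
    qed
  qed
  have "card (W - {0}) = q^2 - 1" using cardW W0 by (simp add: card_Diff_subset)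
  moreover have "card (W - {0}) = card D * (q - 1)" using bij_betw_same_card[OF bij] by (simp add: card_cartesian_product)
  moreover have "(q+1)*(q-1) = q^2 - 1"
  proof -
    obtain r where r: "q = Suc r" using q2 by (cases q) auto
    show ?thesis by (simp add: r algebra_simps power2_eq_square)
  qed
  ultimately have "card D * (q - 1) = (q+1)*(q-1)" by simp
  then show ?thesis using q2 by (simp del: mult_Suc mult_Suc_right)
qed

lemma finW: "finite W" by simp

lemma W_neg: assumes "x \<in> W" shows "-x \<in> W"
proof -
  have "(\<lambda>y. y + x) ` W = W"
    by (rule endo_inj_surj) (auto simp: inj_on_def W_add assms)
  then have "0 \<in> (\<lambda>y. y + x) ` W" using W0 by simp
  then obtain y where y: "y \<in> W" "y + x = 0" by auto
  then have "y = -x" by (simp add: eq_neg_iff_add_eq_0)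
  then show ?thesis using y by simp
qed

lemma W_diff: "x \<in> W \<Longrightarrow> y \<in> W \<Longrightarrow> x - y \<in> W"
proof -
  assume "x \<in> W" "y \<in> W"
  then have "x + (-y) \<in> W" using W_add W_neg by blast
  then show "x - y \<in> W" by simp
qed

lemma meet: assumes b: "\<beta> \<noteq> 0" shows "\<exists>x. x \<noteq> 0 \<and> x \<in> W \<and> \<beta> * x \<in> W"
proof (rule ccontr)
  assume nz: "\<not> ?thesis"
  define V where "V = {y. \<beta> * y \<in> W}"
  have "bij_betw (\<lambda>y. \<beta> * y) V W"
    unfolding bij_betw_def V_def
  proof
    show "inj_on ((*) \<beta>) {y. \<beta> * y \<in> W}" using b by (auto simp: inj_on_def)
    show "(*) \<beta> ` {y. \<beta> * y \<in> W} = W"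
    proof
      show "W \<subseteq> (*) \<beta> ` {y. \<beta> * y \<in> W}"
      proof
        fix x assume "x \<in> W"
        then have "x = \<beta> * (x / \<beta>)" "\<beta> * (x / \<beta>) \<in> W" using b by auto
        then show "x \<in> (*) \<beta> ` {y. \<beta> * y \<in> W}" by blast
      qed
    qed auto
  qed
  then have cV: "card V = q^2" using cardW by (simp add: bij_betw_same_card)
  have "inj_on (\<lambda>(w,v). w + v) (W \<times> V)"
  proof (rule inj_onI)
    fix a b assume ha: "a \<in> W \<times> V" "b \<in> W \<times> V" "(\<lambda>(w,v). w + v) a = (\<lambda>(w,v). w + v) b"
    obtain w v where a: "a = (w,v)" by force
    obtain w' v' where bb: "b = (w',v')" by force
    have h: "w \<in> W" "w' \<in> W" "\<beta>*v \<in> W" "\<beta>*v' \<in> W" "w + v = w' + v'"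
      using ha a bb by (auto simp: V_def)
    have e: "w - w' = v' - v" using h(5) by (simp add: algebra_simps)
    have "w - w' \<in> W" using h W_diff by simp
    moreover have "\<beta> * (w - w') \<in> W" using e h W_diff by (simp add: right_diff_distrib)
    ultimately have "w - w' = 0" using nz by blast
    then show "a = b" using a bb e by simp
  qed
  then have "card (W \<times> V) \<le> card (UNIV :: 'a set)"
    using card_inj_on_le[of "\<lambda>(w,v). w + v" "W \<times> V" UNIV] by simp
  then have "q^2 * q^2 \<le> q^3" using cV cardW card by (simp add: card_cartesian_product)
  moreover have "q^3 < q^2 * q^2"
  proof -
    have "q^3 * 1 < q^3 * q" using q2 by (intro mult_strict_left_mono) auto
    then show ?thesis by (simp add: power2_eq_square power3_eq_cube mult.assoc)
  qed
  ultimately show False by simp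
qed

lemma exists_d: assumes "0 < d" "d < N" shows "\<exists>j\<in>D. (j + d) mod N \<in> D"
proof -
  have "\<alpha>^d \<noteq> 0" using a0 by simp
  from meet[OF this] obtain x where x: "x \<noteq> 0" "x \<in> W" "\<alpha>^d * x \<in> W" by blast
  then obtain k where k: "x = \<alpha>^k" using prim by (auto simp: primitive_element_def)
  have "\<alpha>^(k mod N) \<in> W" using x k W_mod by simp
  then have j: "k mod N \<in> D" using Npos by (simp add: D_def)
  have "\<alpha>^(k + d) \<in> W" using x k by (simp add: power_add mult.commute)
  then have "\<alpha>^((k + d) mod N) \<in> W" using W_mod by blast
  moreover have "(k + d) mod N = (k mod N + d) mod N" by (simp add: mod_add_left_eq)
  ultimately have "(k mod N + d) mod N \<in> D" using Npos by (simp add: D_def)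
  then show ?thesis using j by blast
qed

definition c where "c d = card {j\<in>D. (j + d) mod N \<in> D}"

lemma D_lt: "j \<in> D \<Longrightarrow> j < N" by (simp add: D_def)

lemma rot_card: assumes "j < N" shows "card {d\<in>{..<N}. (j + d) mod N \<in> D} = card D"
proof -
  define h where "h d = (j + d) mod N" for d
  have "inj_on h {d\<in>{..<N}. h d \<in> D}"
  proof (rule inj_onI)
    fix d d' assume "d \<in> {d\<in>{..<N}. h d \<in> D}" "d' \<in> {d\<in>{..<N}. h d \<in> D}" "h d = h d'"
    then have "[j + d = j + d'] (mod N)" "d < N" "d' < N" by (auto simp: h_def cong_def)
    then have "[d = d'] (mod N)" "d < N" "d' < N" using cong_add_lcancel_nat by blast+
    then show "d = d'" by (simp add: cong_def)
  qed
  moreover have "h ` {d\<in>{..<N}. h d \<in> D} = D"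
  proof
    show "D \<subseteq> h ` {d\<in>{..<N}. h d \<in> D}"
    proof
      fix i assume i: "i \<in> D"
      then have iN: "i < N" by (rule D_lt)
      define d where "d = (i + N - j) mod N"
      have "h d = (j + (i + N - j)) mod N" unfolding h_def d_def by (simp add: mod_add_right_eq)
      also have "j + (i + N - j) = i + N" using assms by simp
      also have "(i + N) mod N = i" using iN by simp
      finally have "h d = i" .
      moreover have "d < N" using Npos by (simp add: d_def)
      ultimately show "i \<in> h ` {d\<in>{..<N}. h d \<in> D}" using i by force
    qed
  qed auto
  ultimately have "card {d\<in>{..<N}. h d \<in> D} = card D" by (metis card_image)
  then show ?thesis by (simp add: h_def)
qed

lemma sum_c: "(\<Sum>d<N. c d) = card D * card D"
proof -
  have "(\<Sum>d<N. c d) = (\<Sum>d<N. \<Sum>j\<in>D. if (j + d) mod N \<in> D then 1 else 0)"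
    unfolding c_def by (simp add: sum.inter_filter[OF finD, symmetric])
  also have "\<dots> = (\<Sum>j\<in>D. \<Sum>d<N. if (j + d) mod N \<in> D then 1 else 0)"
    by (rule sum.swap)
  also have "\<dots> = (\<Sum>j\<in>D. card {d\<in>{..<N}. (j + d) mod N \<in> D})"
    by (simp add: sum.inter_filter[symmetric])
  also have "\<dots> = (\<Sum>j\<in>D. card D)"
    using rot_card D_lt by (intro sum.cong) auto
  finally show ?thesis by simp
qed

lemma c0: "c 0 = card D"
proof -
  have "{j\<in>D. (j + 0) mod N \<in> D} = D" using D_lt by auto
  then show ?thesis by (simp add: c_def)
qed

lemma c_ge: "0 < d \<Longrightarrow> d < N \<Longrightarrow> c d \<ge> 1"
proof -
  assume "0 < d" "d < N"
  from exists_d[OF this] have "{j\<in>D. (j + d) mod N \<in> D} \<noteq> {}" by blast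
  then show "c d \<ge> 1" unfolding c_def using finD by (simp add: Suc_le_eq card_gt_0_iff)
qed

lemma c1: assumes "0 < d" "d < N" shows "c d = 1"
proof (rule ccontr)
  assume ne: "c d \<noteq> 1"
  have split: "{..<N} = insert 0 {1..<N}" using Npos by auto
  have "(\<Sum>d<N. c d) = c 0 + (\<Sum>d\<in>{1..<N}. c d)" by (simp add: split)
  then have eq: "(\<Sum>d\<in>{1..<N}. c d) = N - 1"
    using sum_c c0 cardD by (simp add: N_def power2_eq_square algebra_simps)
  have "(\<Sum>d\<in>{1..<N}. (1::nat)) < (\<Sum>d\<in>{1..<N}. c d)"
  proof (rule sum_strict_mono_ex1)
    show "\<forall>x\<in>{1..<N}. 1 \<le> c x" using c_ge by auto
    show "\<exists>a\<in>{1..<N}. 1 < c a" using ne c_ge[OF assms] assms by (intro bexI[of _ d]) auto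
  qed simp
  then show False using eq by simp
qed

lemma rot_back: assumes "i < N" "j < N" shows "(j + (i + N - j) mod N) mod N = i"
proof -
  have "(j + (i + N - j) mod N) mod N = (j + (i + N - j)) mod N" by (simp add: mod_add_right_eq)
  also have "j + (i + N - j) = i + N" using assms by simp
  finally show ?thesis using assms by simp
qed

lemma card_S: assumes "t dvd N" "t > 0"
  shows "card {d\<in>{1..<N}. t dvd d} = N div t - 1"
proof -
  have "{d\<in>{1..<N}. t dvd d} = (\<lambda>k. t*k) ` {1..<N div t}"
  proof
    show "{d\<in>{1..<N}. t dvd d} \<subseteq> (\<lambda>k. t*k) ` {1..<N div t}"
    proof
      fix d assume "d \<in> {d\<in>{1..<N}. t dvd d}"
      then obtain k where k: "d = t*k" "1 \<le> d" "d < N" by auto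
      then have "1 \<le> k" by (cases k) auto
      moreover have "k < N div t" using k assms
        by (metis dvd_mult_div_cancel mult_less_cancel1)
      ultimately show "d \<in> (\<lambda>k. t*k) ` {1..<N div t}" using k by auto
    qed
    show "(\<lambda>k. t*k) ` {1..<N div t} \<subseteq> {d\<in>{1..<N}. t dvd d}"
    proof
      fix d assume "d \<in> (\<lambda>k. t*k) ` {1..<N div t}"
      then obtain k where k: "d = t*k" "k \<in> {1..<N div t}" by blast
      then have k: "d = t*k" "1 \<le> k" "k < N div t" by auto
      have "t * k < t * (N div t)" using assms k by (intro mult_strict_left_mono) auto
      moreover have "t * (N div t) = N" using assms by simp
      ultimately have "d < N" using k by simp
      moreover have "1 \<le> d" using k assms by simp
      ultimately show "d \<in> {d\<in>{1..<N}. t dvd d}" using k by auto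
    qed
  qed
  moreover have "inj_on (\<lambda>k. t*k) {1..<N div t}" using assms by (auto simp: inj_on_def)
  ultimately show ?thesis by (simp add: card_image)
qed

lemma off_card: assumes t: "t dvd N" "t > 0"
  shows "card {(i,j)\<in>D \<times> D. i \<noteq> j \<and> i mod t = j mod t} = N div t - 1"
proof -
  define P where "P = {(i,j)\<in>D \<times> D. i \<noteq> j \<and> i mod t = j mod t}"
  define S where "S = {d\<in>{1..<N}. t dvd d}"
  define \<delta> where "\<delta> = (\<lambda>(i,j). (i + N - j) mod N)"
  have modt: "(x mod N) mod t = x mod t" for x using t by (simp add: mod_mod_cancel)
  have dv: "t dvd (i + N - j) \<longleftrightarrow> i mod t = j mod t" if "j < N" for i j
  proof -
    have "t dvd (i + N - j) \<longleftrightarrow> (i + N) mod t = j mod t"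
      using that by (subst mod_eq_dvd_iff_nat) auto
    also have "(i + N) mod t = i mod t" using t by (simp add: mod_add_right_eq[symmetric])
    finally show ?thesis .
  qed
  have "bij_betw \<delta> P S"
    unfolding bij_betw_def
  proof (intro conjI)
    show "inj_on \<delta> P"
    proof (rule inj_onI)
      fix a b assume ha: "a \<in> P" "b \<in> P" "\<delta> a = \<delta> b"
      obtain i j where a: "a = (i,j)" by force
      obtain i' j' where b: "b = (i',j')" by force
      have h: "i \<in> D" "j \<in> D" "i' \<in> D" "j' \<in> D" "i \<noteq> j" "i' \<noteq> j'"
        "(i + N - j) mod N = (i' + N - j') mod N"
        using ha a b by (auto simp: P_def \<delta>_def)
      define d where "d = (i + N - j) mod N"
      have ij: "(j + d) mod N = i" using rot_back[of i j] h D_lt unfolding d_def by blast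
      have ij': "(j' + d) mod N = i'" using rot_back[of i' j'] h D_lt unfolding d_def by metis
      have "d \<noteq> 0"
      proof
        assume "d = 0" then have "j mod N = i" using ij by simp
        then show False using h D_lt by simp
      qed
      moreover have "d < N" using Npos by (simp add: d_def)
      ultimately have "c d = 1" using c1 by simp
      then obtain j0 where "{j\<in>D. (j + d) mod N \<in> D} = {j0}" unfolding c_def by (auto simp: card_Suc_eq)
      moreover have "j \<in> {j\<in>D. (j + d) mod N \<in> D}" "j' \<in> {j\<in>D. (j + d) mod N \<in> D}"
        using h ij ij' by auto
      ultimately have "j \<in> {j0}" "j' \<in> {j0}" by simp_all
      then have "j = j'" by simp
      then show "a = b" using a b ij ij' by simp
    qed
    show "\<delta> ` P = S"
    proof
      show "\<delta> ` P \<subseteq> S"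
      proof
        fix x assume "x \<in> \<delta> ` P"
        then obtain i j where h: "i \<in> D" "j \<in> D" "i \<noteq> j" "i mod t = j mod t" "x = (i + N - j) mod N"
          by (auto simp: P_def \<delta>_def)
        have iN: "i < N" "j < N" using h D_lt by auto
        have "x \<noteq> 0"
        proof
          assume "x = 0"
          then have "(j + x) mod N = j" using iN by simp
          then show False using rot_back[OF iN] h by simp
        qed
        moreover have "x < N" using h Npos by simp
        moreover have "t dvd x"
        proof -
          have "t dvd (i + N - j)" using dv iN h by simp
          then have "(i + N - j) mod t = 0" by simp
          then have "x mod t = 0" using modt h by simp
          then show ?thesis by auto
        qed
        ultimately show "x \<in> S" by (simp add: S_def)
      qed
      show "S \<subseteq> \<delta> ` P"
      proof
        fix d assume "d \<in> S"
        then have d: "1 \<le> d" "d < N" "t dvd d" by (auto simp: S_def)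
        then have "c d = 1" using c1 by simp
        then obtain j where j: "j \<in> D" "(j + d) mod N \<in> D" unfolding c_def by (auto simp: card_Suc_eq)
        define i where "i = (j + d) mod N"
        have jN: "j < N" using j D_lt by simp
        have "i \<noteq> j"
        proof
          assume "i = j"
          then have "(j + d) mod N = (j + 0) mod N" using jN by (simp add: i_def)
          then have "[j + d = j + 0] (mod N)" by (simp add: cong_def)
          then have "[d = 0] (mod N)" using cong_add_lcancel_nat by blast
          then show False using d by (simp add: cong_def)
        qed
        moreover have "i mod t = j mod t"
        proof -
          have "i mod t = (j + d) mod t" using modt by (simp add: i_def)
          also have "\<dots> = j mod t" using d by (auto simp: mod_add_right_eq[symmetric])
          finally show ?thesis .
        qed
        moreover have "\<delta> (i, j) = d"
        proof -
          have "(i + N - j) mod N = ((j + d) mod N + N - j) mod N" by (simp add: i_def)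
          have "[(j + d) mod N + N - j = d] (mod N)"
          proof -
            have "[(j + d) mod N + N = j + d + N] (mod N)" by (simp add: cong_def mod_add_left_eq)
            moreover have "[j + d + N = j + d] (mod N)" by (simp add: cong_def)
            ultimately have "[(j + d) mod N + N = j + d] (mod N)" using cong_trans by blast
            then have "[(j + d) mod N + N - j = j + d - j] (mod N)"
              using jN by (intro cong_diff_nat) auto
            then show ?thesis by simp
          qed
          then show ?thesis using d by (simp add: \<delta>_def i_def cong_def)
        qed
        ultimately show "d \<in> \<delta> ` P" using j unfolding P_def i_def by force
      qed
    qed
  qed
  then have "card P = card S" by (rule bij_betw_same_card)
  then show ?thesis using card_S[OF t] by (simp add: P_def S_def)
qed

definition A where "A t u = {i\<in>D. i mod t = u}"

lemma sumA: assumes "t > 0" shows "(\<Sum>u<t. card (A t u)) = card D"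
proof -
  have "(\<Sum>u<t. card (A t u)) = (\<Sum>u<t. \<Sum>i\<in>D. if i mod t = u then 1 else 0)"
    unfolding A_def by (simp add: sum.inter_filter[OF finD, symmetric])
  also have "\<dots> = (\<Sum>i\<in>D. \<Sum>u<t. if i mod t = u then 1 else 0)" by (rule sum.swap)
  also have "\<dots> = (\<Sum>i\<in>D. 1)"
  proof (rule sum.cong)
    fix i assume "i \<in> D"
    have "(\<Sum>u<t. if i mod t = u then 1 else 0) = (\<Sum>u\<in>{..<t}. if u = i mod t then 1 else (0::nat))"
      by (intro sum.cong) auto
    also have "\<dots> = 1" using assms by (subst sum.delta) auto
    finally show "(\<Sum>u<t. if i mod t = u then 1 else 0) = (1::nat)" .
  qed simp
  finally show ?thesis by simp
qed

lemma sqA: assumes "t dvd N" "t > 0"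
  shows "(\<Sum>u<t. card (A t u) * card (A t u)) = card D + (N div t - 1)"
proof -
  have "(\<Sum>u<t. card (A t u) * card (A t u)) = (\<Sum>u<t. card (A t u \<times> A t u))"
    by (simp add: card_cartesian_product)
  also have "\<dots> = card (\<Union>u<t. A t u \<times> A t u)"
    by (rule card_UN_disjoint[symmetric]) (auto simp: A_def finD)
  also have "(\<Union>u<t. A t u \<times> A t u) = (\<lambda>i. (i,i)) ` D \<union> {(i,j)\<in>D \<times> D. i \<noteq> j \<and> i mod t = j mod t}"
  proof -
    have "(i,j) \<in> (\<Union>u<t. A t u \<times> A t u) \<longleftrightarrow> (i,j) \<in> (\<lambda>i. (i,i)) ` D \<union> {(i,j)\<in>D \<times> D. i \<noteq> j \<and> i mod t = j mod t}" for i j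
      unfolding A_def using assms(2) by auto
    then show ?thesis by (auto simp: A_def)
  qed
  also have "card \<dots> = card ((\<lambda>i. (i,i)) ` D) + card {(i,j)\<in>D \<times> D. i \<noteq> j \<and> i mod t = j mod t}"
  proof (rule card_Un_disjoint)
    show "finite {(i,j)\<in>D \<times> D. i \<noteq> j \<and> i mod t = j mod t}"
      by (rule finite_subset[of _ "D \<times> D"]) (auto simp: finD)
  qed (auto simp: finD)
  also have "card ((\<lambda>i. (i,i)) ` D) = card D" by (simp add: card_image inj_on_def)
  finally show ?thesis using off_card[OF assms] by simp
qed

lemma tauA:
  assumes tau: "(\<lambda>i. (i * p) mod N) ` D = D" and t: "t dvd N" "t > 0" and cop: "coprime p t"
    and u: "u < t"
  shows "card (A t ((u * p) mod t)) = card (A t u)"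
proof -
  define \<tau> where "\<tau> = (\<lambda>i. (i * p) mod N)"
  have injD: "inj_on \<tau> D" by (rule eq_card_imp_inj_on[OF finD]) (simp add: \<tau>_def tau)
  have modt: "(x mod N) mod t = x mod t" for x using t by (simp add: mod_mod_cancel)
  have "\<tau> ` A t u = A t ((u * p) mod t)"
  proof
    show "\<tau> ` A t u \<subseteq> A t ((u * p) mod t)"
    proof
      fix y assume "y \<in> \<tau> ` A t u"
      then obtain i where i: "i \<in> D" "i mod t = u" "y = \<tau> i" by (auto simp: A_def)
      have "y \<in> \<tau> ` D" using i by blast
      then have "y \<in> D" using tau unfolding \<tau>_def by simp
      moreover have "y mod t = (i * p) mod t" using i modt by (simp add: \<tau>_def)
      moreover have "(i * p) mod t = (u * p) mod t" using i(2) mod_mult_left_eq[of i t p] by simp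
      ultimately
      show "y \<in> A t ((u * p) mod t)" by (simp add: A_def)
    qed
    show "A t ((u * p) mod t) \<subseteq> \<tau> ` A t u"
    proof
      fix y assume "y \<in> A t ((u * p) mod t)"
      then have y: "y \<in> D" "y mod t = (u * p) mod t" by (auto simp: A_def)
      have "y \<in> \<tau> ` D" using y(1) tau unfolding \<tau>_def by simp
      then obtain i where i: "i \<in> D" "y = \<tau> i" by blast
      have "(i * p) mod t = (u * p) mod t" using y i modt by (simp add: \<tau>_def)
      then have "[i * p = u * p] (mod t)" by (simp add: cong_def)
      then have "[i = u] (mod t)" using cop cong_mult_rcancel_nat[of p t i u] by (simp add: coprime_commute)
      then have "i mod t = u" using u unfolding cong_def by simp
      then show "y \<in> \<tau> ` A t u" using i by (auto simp: A_def)
    qed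
  qed
  moreover have "A t u \<subseteq> D" by (auto simp: A_def)
  then have "inj_on \<tau> (A t u)" using injD inj_on_subset by blast
  ultimately show ?thesis using card_image by metis
qed

end

lemma alg: fixes w0 w t q s M :: int
 assumes "w0 + (t-1)*w = q+1" "w0*w0 + (t-1)*w*w = q + M" "t*M = q^2+q+1" "t > 1"
 shows "(t*w - (q+1))^2 = q"
proof -
  have w0: "w0 = q+1-(t-1)*w" using assms(1) by simp
  have "(t-1)*((t*w-(q+1))^2 - q) = t*(w0*w0 + (t-1)*w*w - q) - (q^2+q+1)"
    unfolding w0 by (simp add: power2_eq_square algebra_simps)
  then have "(t-1)*((t*w-(q+1))^2 - q) = t*(w0*w0 + (t-1)*w*w - q - M)"
    using assms(3) by (simp add: algebra_simps)
  then have "(t-1)*((t*w-(q+1))^2 - q) = 0" using assms(2) by simp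
  then show ?thesis using assms(4) by simp
qed

theorem proposition6:
  fixes \<alpha> :: "'a::{field, finite}" and W :: "'a set"
    and p h q s t :: nat
  assumes "prime p" and "h \<ge> 1" and "q = p ^ h"
    and "card (UNIV :: 'a set) = q ^ 3"
    and "primitive_element \<alpha>"
    and "is_line q W"
    and "tau p q ` pts_on \<alpha> q W = pts_on \<alpha> q W"
    and "q = s ^ 2"
    and "prime t" and "t dvd q^2 + q + 1"
    and "residue_primroot t p"
  shows "(t dvd q + s + 1 \<or> t dvd q - s + 1) \<and>
    (\<exists>\<epsilon>::int. \<epsilon> \<in> {1, -1} \<and>
      (\<forall>u\<in>{1..t-1}. real (wcount \<alpha> q t W u) = real_of_int (int q + 1 + \<epsilon> * int s) / real t) \<and>
      real (wcount \<alpha> q t W 0) = real_of_int (int q + 1 + \<epsilon> * (1 - int t) * int s) / real t)"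
proof -
  have p2: "p \<ge> 2" using assms(1) by (simp add: prime_ge_2_nat)
  have "p ^ 1 \<le> p ^ h" using assms(2) p2 by (intro power_increasing) auto
  then have q2: "q \<ge> 2" using p2 assms(3) by simp
  interpret pg \<alpha> q W using assms(4-6) q2 by unfold_locales auto
  have t1: "t > 1" using prime_gt_1_nat[OF assms(9)] by simp
  have t0: "t > 0" using t1 by simp
  have tN: "t dvd N" using assms(10) by (simp add: N_def)
  have cop: "coprime p t" using assms(11) by (simp add: residue_primroot_def coprime_commute)
  have tauD: "(\<lambda>i. (i * p) mod N) ` D = D"
    using assms(7) by (simp add: tau_def N_def D_eq[symmetric])
  have wc: "wcount \<alpha> q t W u = card (A t u)" for u
    by (simp add: wcount_def D_eq A_def)
  have powk: "card (A t ((u * p^k) mod t)) = card (A t u)" if "u < t" for u k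
  proof (induction k)
    case 0 then show ?case using that by simp
  next
    case (Suc k)
    have "(u * p^Suc k) mod t = (((u * p^k) mod t) * p) mod t"
    proof -
      have "(((u * p^k) mod t) * p) mod t = ((u * p^k) * p) mod t" by (rule mod_mult_left_eq)
      moreover have "(u * p^k) * p = u * p^Suc k" by (simp add: mult.assoc mult.commute)
      ultimately show ?thesis by simp
    qed
    then have "card (A t ((u * p^Suc k) mod t)) = card (A t ((u * p^k) mod t))"
      using tauA[OF tauD tN t0 cop, of "(u * p^k) mod t"] t0 by simp
    then show ?case using Suc by simp
  qed
  define w where "w = card (A t 1)"
  define w0 where "w0 = card (A t 0)"
  have wu: "card (A t u) = w" if "u \<in> {1..<t}" for u
  proof -
    have "u \<in> totatives t" using that assms(9) by (simp add: totatives_prime)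
    moreover have "(\<lambda>i. p ^ i mod t) ` {..<totient t} = totatives t"
      using residue_primroot_is_generator[OF t1 assms(11)] unfolding bij_betw_def by blast
    ultimately have "u \<in> (\<lambda>i. p ^ i mod t) ` {..<totient t}" by simp
    then obtain k where "p^k mod t = u" by blast
    then show ?thesis using powk[of 1 k] t1 by (simp add: w_def)
  qed
  have split: "{..<t} = insert 0 {1..<t}" using t0 by auto
  have s1: "w0 + (t-1)*w = q+1"
  proof -
    have "(\<Sum>u<t. card (A t u)) = w0 + (\<Sum>u\<in>{1..<t}. card (A t u))" by (simp add: split w0_def)
    also have "(\<Sum>u\<in>{1..<t}. card (A t u)) = (\<Sum>u\<in>{1..<t}. w)" using wu by (intro sum.cong) auto
    finally show ?thesis using sumA[OF t0] cardD by simp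
  qed
  have s2: "w0*w0 + (t-1)*(w*w) = q + N div t"
  proof -
    have "(\<Sum>u<t. card (A t u) * card (A t u)) = w0*w0 + (\<Sum>u\<in>{1..<t}. card (A t u) * card (A t u))"
      by (simp add: split w0_def)
    also have "(\<Sum>u\<in>{1..<t}. card (A t u) * card (A t u)) = (\<Sum>u\<in>{1..<t}. w*w)" using wu by (intro sum.cong) auto
    finally have "w0*w0 + (t-1)*(w*w) = card D + (N div t - 1)" using sqA[OF tN t0] by simp
    moreover have "N div t \<ge> 1"
    proof -
      have "t * (N div t) = N" using tN by simp
      then show ?thesis using Npos by (cases "N div t") auto
    qed
    ultimately show ?thesis using cardD by simp
  qed
  define M where "M = N div t"
  have tM: "t * M = N" using tN by (simp add: M_def)
  have it: "int (t - 1) = int t - 1" using t0 by (simp add: of_nat_diff)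
  have s1i: "int w0 + (int t - 1) * int w = int q + 1"
  proof -
    have "int (w0 + (t-1)*w) = int (q+1)" using s1 by simp
    then show ?thesis unfolding of_nat_add of_nat_mult it by simp
  qed
  have s2i: "int w0 * int w0 + (int t - 1) * int w * int w = int q + int M"
  proof -
    have "int (w0*w0 + (t-1)*(w*w)) = int (q + M)" using s2 by (simp add: M_def)
    then show ?thesis unfolding of_nat_add of_nat_mult it by (simp add: mult.assoc)
  qed
  have tMi: "int t * int M = (int q)^2 + int q + 1"
  proof -
    have "int (t * M) = int (q^2 + q + 1)" using tM by (simp add: N_def)
    then show ?thesis unfolding of_nat_add of_nat_mult of_nat_power by simp
  qed
  have e: "(int t * int w - (int q + 1))^2 = int q"
  proof (rule alg[of "int w0"])
    show "int w0 + (int t - 1) * int w = int q + 1" by (rule s1i)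
    show "int w0 * int w0 + (int t - 1) * int w * int w = int q + int M" by (rule s2i)
    show "int t * int M = (int q)^2 + int q + 1" by (rule tMi)
    show "int t > 1" using t1 by simp
  qed
  then have "(int t * int w - (int q + 1))^2 = (int s)^2" using assms(8) by simp
  then have pm: "int t * int w - (int q + 1) = int s \<or> int t * int w - (int q + 1) = - int s"
    by (simp add: power2_eq_iff)
  have sq: "s \<le> q" using assms(8) by (cases s) (auto simp: power2_eq_square)
  obtain \<epsilon> :: int where eps: "\<epsilon> \<in> {1, -1}" "int t * int w = int q + 1 + \<epsilon> * int s"
  proof (cases "int t * int w - (int q + 1) = int s")
    case True
    then show ?thesis using that[of 1] by simp
  next
    case False
    then have "int t * int w - (int q + 1) = - int s" using pm by simp
    then show ?thesis using that[of "-1"] by simp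
  qed
  have w0e: "int t * int w0 = int q + 1 + \<epsilon> * (1 - int t) * int s"
  proof -
    have "int w0 = int q + 1 - (int t - 1) * int w" using s1i by simp
    then have "int t * int w0 = int t * (int q + 1 - (int t - 1) * int w)" by simp
    also have "\<dots> = int t * (int q + 1) - (int t - 1) * (int t * int w)" by (simp add: algebra_simps)
    finally have "int t * int w0 = int t * (int q + 1) - (int t - 1) * (int t * int w)" .
    also have "(int t - 1) * (int t * int w) = (int t - 1) * (int q + 1 + \<epsilon> * int s)"
      using eps(2) by simp
    also have "int t * (int q + 1) - (int t - 1) * (int q + 1 + \<epsilon> * int s) = int q + 1 + \<epsilon> * (1 - int t) * int s"
      by (simp add: algebra_simps)
    finally show ?thesis .
  qed
  have dv: "t dvd q + s + 1 \<or> t dvd q - s + 1"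
  proof (cases "\<epsilon> = 1")
    case True
    then have "int (t * w) = int (q + s + 1)" using eps by simp
    then have "t * w = q + s + 1" by (simp only: of_nat_eq_iff)
    then show ?thesis using dvd_triv_left[of t w] by simp
  next
    case False
    then have "\<epsilon> = -1" using eps by auto
    then have "int (t * w) = int (q - s + 1)" using eps sq by (simp add: of_nat_diff)
    then have "t * w = q - s + 1" by (simp only: of_nat_eq_iff)
    then show ?thesis using dvd_triv_left[of t w] by simp
  qed
  have rt: "real t \<noteq> 0" using t0 by simp
  have r1: "real w = real_of_int (int q + 1 + \<epsilon> * int s) / real t"
  proof -
    have "real_of_int (int t * int w) = real_of_int (int q + 1 + \<epsilon> * int s)" using eps by simp
    then have "real t * real w = real_of_int (int q + 1 + \<epsilon> * int s)" by simp
    moreover have "real w = (real t * real w) / real t" using rt by simp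
    ultimately show ?thesis by simp
  qed
  have r0: "real w0 = real_of_int (int q + 1 + \<epsilon> * (1 - int t) * int s) / real t"
  proof -
    have "real_of_int (int t * int w0) = real_of_int (int q + 1 + \<epsilon> * (1 - int t) * int s)" using w0e by simp
    then have "real t * real w0 = real_of_int (int q + 1 + \<epsilon> * (1 - int t) * int s)" by simp
    moreover have "real w0 = (real t * real w0) / real t" using rt by simp
    ultimately show ?thesis by simp
  qed
  have A1: "\<forall>u\<in>{1..t-1}. real (wcount \<alpha> q t W u) = real_of_int (int q + 1 + \<epsilon> * int s) / real t"
  proof
    fix u assume "u \<in> {1..t-1}"
    then have "u \<in> {1..<t}" using t1 by auto
    then have "card (A t u) = w" by (rule wu)
    then show "real (wcount \<alpha> q t W u) = real_of_int (int q + 1 + \<epsilon> * int s) / real t"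
      using r1 wc by simp
  qed
  have A0: "real (wcount \<alpha> q t W 0) = real_of_int (int q + 1 + \<epsilon> * (1 - int t) * int s) / real t"
    using r0 wc by (simp add: w0_def)
  have ex: "\<exists>\<epsilon>::int. \<epsilon> \<in> {1, -1} \<and>
      (\<forall>u\<in>{1..t-1}. real (wcount \<alpha> q t W u) = real_of_int (int q + 1 + \<epsilon> * int s) / real t) \<and>
      real (wcount \<alpha> q t W 0) = real_of_int (int q + 1 + \<epsilon> * (1 - int t) * int s) / real t"
    by (rule exI[of _ \<epsilon>]) (intro conjI eps(1) A1 A0)
  show ?thesis by (rule conjI[OF dv ex])
qed

end
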